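(* Let $\frac{1}{2}< \alpha <1$ and let $G$ be a graph with $n$ vertices and $m$ edges having no isolated vertices. If $1\leq k\leq n-1$, then $$S_{k}(A_{\alpha}(G))\leq 2\alpha m-(n-k)\left(\frac{\det(A_{\alpha}(G))}{\lambda_1(A_{\alpha}(G))\,\lambda_2^{k-1}(A_{\alpha}(G))}\right)^{\frac{1}{n-k}},$$ with equality if and only if $\lambda_2(A_{\alpha}(G))=\cdots=\lambda_k(A_{\alpha}(G))$ and $\lambda_{k+1}(A_{\alpha}(G))=\cdots=\lambda_n(A_{\alpha}(G))$.
   Context: All graphs are simple and undirected. $A_{\alpha}(G)=\alpha D(G)+(1-\alpha)A(G)$, where $A(G)$ is the adjacency matrix and $D(G)$ the diagonal matrix of vertex degrees. $\lambda_1(M)\geq\cdots\geq\lambda_n(M)$ denote the eigenvalues of a real symmetric matrix $M$, and $S_k(M)=\sum_{i=1}^k\lambda_i(M)$. *)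

theory Defs
  imports "Jordan_Normal_Form.Determinant" "Jordan_Normal_Form.Char_Poly"
begin

definition simple_graph :: "nat \<Rightarrow> (nat \<Rightarrow> nat \<Rightarrow> bool) \<Rightarrow> bool" where
  "simple_graph n E \<longleftrightarrow> (\<forall>i<n. \<forall>j<n. E i j \<longleftrightarrow> E j i) \<and> (\<forall>i<n. \<not> E i i)"

definition num_edges :: "nat \<Rightarrow> (nat \<Rightarrow> nat \<Rightarrow> bool) \<Rightarrow> nat" where
  "num_edges n E = card {(i, j). i < j \<and> j < n \<and> E i j}"

definition degree :: "nat \<Rightarrow> (nat \<Rightarrow> nat \<Rightarrow> bool) \<Rightarrow> nat \<Rightarrow> nat" where
  "degree n E i = card {j. j < n \<and> E i j}"

definition no_isolated :: "nat \<Rightarrow> (nat \<Rightarrow> nat \<Rightarrow> bool) \<Rightarrow> bool" where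
  "no_isolated n E \<longleftrightarrow> (\<forall>i<n. \<exists>j<n. E i j)"

definition adj_matrix :: "nat \<Rightarrow> (nat \<Rightarrow> nat \<Rightarrow> bool) \<Rightarrow> real mat" where
  "adj_matrix n E = mat n n (\<lambda>(i, j). if E i j then 1 else 0)"

definition deg_matrix :: "nat \<Rightarrow> (nat \<Rightarrow> nat \<Rightarrow> bool) \<Rightarrow> real mat" where
  "deg_matrix n E = mat n n (\<lambda>(i, j). if i = j then real (degree n E i) else 0)"

definition A_alpha :: "real \<Rightarrow> nat \<Rightarrow> (nat \<Rightarrow> nat \<Rightarrow> bool) \<Rightarrow> real mat" where
  "A_alpha \<alpha> n E = \<alpha> \<cdot>\<^sub>m deg_matrix n E + (1 - \<alpha>) \<cdot>\<^sub>m adj_matrix n E"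

text \<open>Eigenvalues (with multiplicity) of a real matrix whose characteristic polynomial
  splits over the reals (e.g. real symmetric matrices), listed in non-increasing order:
  eigs M ! (i-1) is lambda_i(M).\<close>
definition eigs :: "real mat \<Rightarrow> real list" where
  "eigs M = (THE xs. sorted_wrt (\<ge>) xs \<and> length xs = dim_row M \<and>
                      char_poly M = (\<Prod>x\<leftarrow>xs. [:- x, 1:]))"

definition S_k :: "nat \<Rightarrow> real mat \<Rightarrow> real" where
  "S_k k M = sum_list (take k (eigs M))"

end

theory Submission imports Defs "HOL-Analysis.Convex" "Jordan_Normal_Form.Schur_Decomposition"
begin

lemma eig_real_pos:
  fixes M :: "real mat" and a :: complex
  assumes M: "M \<in> carrier_mat n n"
    and sym: "\<And>i j. i < n \<Longrightarrow> j < n \<Longrightarrow> M $$ (i,j) = M $$ (j,i)"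
    and Q: "\<And>x. (\<Sum>i<n. \<Sum>j<n. M $$ (i,j) * x i * x j) \<ge> c * (\<Sum>i<n. (x i)\<^sup>2)"
    and ev: "eigenvalue (map_mat complex_of_real M) a"
  shows "Im a = 0 \<and> Re a \<ge> c"
proof -
  let ?Mc = "map_mat complex_of_real M"
  from ev obtain v where v: "v \<in> carrier_vec n" "v \<noteq> 0\<^sub>v n" "?Mc *\<^sub>v v = a \<cdot>\<^sub>v v"
    unfolding eigenvalue_def eigenvector_def using M by auto
  define x where "x i = Re (v $ i)" for i
  define y where "y i = Im (v $ i)" for i
  have row: "(?Mc *\<^sub>v v) $ i = (\<Sum>j<n. complex_of_real (M $$ (i,j)) * v $ j)" if "i < n" for i
    using that M v(1) by (auto simp: scalar_prod_def lessThan_atLeast0 intro!: sum.cong)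
  have eq: "(?Mc *\<^sub>v v) $ i = a * v $ i" if "i < n" for i
    using v(3) that v(1) by (metis carrier_vecD index_smult_vec(1))
  define S where "S = (\<Sum>i<n. cnj (v $ i) * (\<Sum>j<n. complex_of_real (M $$ (i,j)) * v $ j))"
  define N where "N = (\<Sum>i<n. (x i)\<^sup>2 + (y i)\<^sup>2)"
  have S1: "S = a * complex_of_real N"
  proof -
    have "S = (\<Sum>i<n. cnj (v $ i) * (a * v $ i))"
      unfolding S_def using row eq by (intro sum.cong) auto
    also have "\<dots> = a * (\<Sum>i<n. cnj (v $ i) * v $ i)"
      by (simp add: sum_distrib_left algebra_simps)
    also have "(\<Sum>i<n. cnj (v $ i) * v $ i) = complex_of_real N"
      unfolding N_def x_def y_def of_real_sum
      by (intro sum.cong refl) (simp add: complex_eq_iff power2_eq_square)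
    finally show ?thesis .
  qed
  have ReS0: "Re S = (\<Sum>i<n. \<Sum>j<n. M $$ (i,j) * (x i * x j + y i * y j))"
    unfolding S_def sum_distrib_left Re_sum
    by (intro sum.cong refl) (simp add: x_def y_def algebra_simps)
  have ReS: "Re S = (\<Sum>i<n. \<Sum>j<n. M $$ (i,j) * x i * x j) + (\<Sum>i<n. \<Sum>j<n. M $$ (i,j) * y i * y j)"
    unfolding ReS0 sum.distrib[symmetric] by (intro sum.cong refl) (simp add: algebra_simps)
  have ImS0: "Im S = (\<Sum>i<n. \<Sum>j<n. M $$ (i,j) * (x i * y j - y i * x j))"
    unfolding S_def sum_distrib_left Im_sum
    by (intro sum.cong refl) (simp add: x_def y_def algebra_simps)
  have ImS: "Im S = (\<Sum>i<n. \<Sum>j<n. M $$ (i,j) * x i * y j) - (\<Sum>i<n. \<Sum>j<n. M $$ (i,j) * y i * x j)"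
    unfolding ImS0 sum_subtractf[symmetric] by (intro sum.cong refl) (simp add: algebra_simps)
  have swap: "(\<Sum>i<n. \<Sum>j<n. M $$ (i,j) * y i * x j) = (\<Sum>i<n. \<Sum>j<n. M $$ (i,j) * x i * y j)"
    apply (subst sum.swap)
    apply (intro sum.cong refl)
    using sym by (simp add: mult.commute)
  have ImS0: "Im S = 0" using ImS swap by simp
  have Npos: "N > 0"
  proof -
    from v(1,2) obtain i where i: "i < n" "v $ i \<noteq> 0"
      by (metis carrier_vecD eq_vecI index_zero_vec(1,2))
    then have "(x i)\<^sup>2 + (y i)\<^sup>2 > 0" unfolding x_def y_def
      by (simp add: complex_eq_iff sum_power2_gt_zero_iff)
    moreover have "(x i)\<^sup>2 + (y i)\<^sup>2 \<le> N" unfolding N_def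
      by (rule member_le_sum) (use i in auto)
    ultimately show ?thesis by linarith
  qed
  have "Im a * N = 0" using S1 ImS0 by simp
  then have ima: "Im a = 0" using Npos by simp
  have "Re a * N = Re S" using S1 ima by simp
  also have "Re S \<ge> c * (\<Sum>i<n. (x i)\<^sup>2) + c * (\<Sum>i<n. (y i)\<^sup>2)"
    unfolding ReS using Q[of x] Q[of y] by linarith
  finally have "Re a * N \<ge> c * N" unfolding N_def by (simp add: sum.distrib algebra_simps)
  then have "Re a \<ge> c" using Npos by simp
  with ima show ?thesis by simp
qed


interpretation of_real_poly_hom: map_poly_inj_idom_hom of_real ..

lemma real_factor:
  fixes M :: "real mat"
  assumes M: "M \<in> carrier_mat n n"
    and sym: "\<And>i j. i < n \<Longrightarrow> j < n \<Longrightarrow> M $$ (i,j) = M $$ (j,i)"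
    and Q: "\<And>x. (\<Sum>i<n. \<Sum>j<n. M $$ (i,j) * x i * x j) \<ge> c * (\<Sum>i<n. (x i)\<^sup>2)"
  shows "\<exists>rs. char_poly M = (\<Prod>r\<leftarrow>rs. [:- r, 1:]) \<and> length rs = n \<and> (\<forall>r\<in>set rs. r \<ge> c)"
proof -
  let ?Mc = "map_mat complex_of_real M"
  have Mc: "?Mc \<in> carrier_mat n n" using M by auto
  obtain as where as: "char_poly ?Mc = (\<Prod>a\<leftarrow>as. [:- a, 1:])" "length as = n"
    using char_poly_factorized[OF Mc] by blast
  have ok: "Im a = 0 \<and> Re a \<ge> c" if "a \<in> set as" for a
  proof -
    have "poly (char_poly ?Mc) a = 0" unfolding as(1) using that
      by (simp add: poly_prod_list prod_list_zero_iff)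
    then have "eigenvalue ?Mc a" using eigenvalue_root_char_poly[OF Mc] by simp
    then show ?thesis using eig_real_pos[OF M sym Q] by blast
  qed
  define rs where "rs = map Re as"
  have asrs: "as = map complex_of_real rs" unfolding rs_def using ok
    by (induct as) (auto simp: complex_eq_iff)
  have cph: "char_poly (map_mat (of_real::real\<Rightarrow>complex) M) = map_poly of_real (char_poly M)"
    by (rule of_real_hom.char_poly_hom[OF M])
  have "map_poly complex_of_real (char_poly M) = char_poly ?Mc"
    using cph by simp
  also have "\<dots> = map_poly complex_of_real (\<Prod>r\<leftarrow>rs. [:- r, 1:])"
    unfolding as(1) asrs by (simp add: of_real_poly_hom.hom_prod_list o_def)
  finally have "char_poly M = (\<Prod>r\<leftarrow>rs. [:- r, 1:])" by simp
  moreover have "length rs = n" using as(2) rs_def by simp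
  moreover have "\<forall>r\<in>set rs. r \<ge> c" using ok unfolding rs_def by auto
  ultimately show ?thesis by blast
qed

lemma prod_list_mset_eq:
  fixes f :: "'a \<Rightarrow> 'b::comm_monoid_mult"
  assumes "mset a = mset b"
  shows "prod_list (map f a) = prod_list (map f b)"
proof -
  have "prod_list (map f a) = prod_mset (mset (map f a))" by (rule prod_mset_prod_list[symmetric])
  also have "\<dots> = prod_mset (mset (map f b))" using assms by simp
  also have "\<dots> = prod_list (map f b)" by (rule prod_mset_prod_list)
  finally show ?thesis .
qed

lemma linfac_mset:
  fixes xs ys :: "real list"
  assumes "(\<Prod>x\<leftarrow>xs. [:- x, 1:]) = (\<Prod>x\<leftarrow>ys. [:- x, 1:])"
  shows "mset xs = mset ys"
  using assms
proof (induct xs arbitrary: ys)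
  case Nil
  have "length ys = Polynomial.degree (\<Prod>x\<leftarrow>ys. [:- x, 1:])" by (simp add: degree_linear_factors)
  also have "\<dots> = 0" using Nil[symmetric] by simp
  finally show ?case by simp
next
  case (Cons x xs)
  have "poly (\<Prod>x\<leftarrow>ys. [:- x, 1:]) x = 0" using Cons(2)[symmetric]
    by (simp add: poly_prod_list)
  then have xin: "x \<in> set ys" by (auto simp: poly_prod_list prod_list_zero_iff)
  then have ms: "mset ys = mset (x # remove1 x ys)" by simp
  have "[:- x, 1:] * (\<Prod>x\<leftarrow>xs. [:- x, 1:]) = [:- x, 1:] * (\<Prod>x\<leftarrow>remove1 x ys. [:- x, 1:])"
    using Cons(2) prod_list_mset_eq[OF ms, of "\<lambda>x. [:- x, 1:]"] by simp
  then have "(\<Prod>x\<leftarrow>xs. [:- x, 1:]) = (\<Prod>x\<leftarrow>remove1 x ys. [:- x, 1:])"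
    by (rule mult_left_cancel[THEN iffD1, rotated]) simp
  from Cons(1)[OF this] have "mset (x # xs) = mset (x # remove1 x ys)" by simp
  then show ?case using ms by (rule trans[OF _ sym])
qed

lemma eigs_eq:
  fixes M :: "real mat"
  assumes "char_poly M = (\<Prod>r\<leftarrow>rs. [:- r, 1:])" "length rs = dim_row M"
  shows "eigs M = rev (sort rs)"
  unfolding eigs_def
proof (rule the_equality)
  have ms: "mset (rev (sort rs)) = mset rs" by simp
  show "sorted_wrt (\<ge>) (rev (sort rs)) \<and> length (rev (sort rs)) = dim_row M \<and>
    char_poly M = (\<Prod>x\<leftarrow>rev (sort rs). [:- x, 1:])"
    using assms prod_list_mset_eq[OF ms, of "\<lambda>x. [:- x, 1:]"] by (simp add: sorted_wrt_rev)
next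
  fix xs assume xs: "sorted_wrt (\<ge>) xs \<and> length xs = dim_row M \<and> char_poly M = (\<Prod>x\<leftarrow>xs. [:- x, 1:])"
  then have "mset xs = mset rs" using assms linfac_mset by metis
  then have "mset (rev xs) = mset rs" by simp
  moreover have "sorted (rev xs)" using xs by (simp add: sorted_wrt_rev)
  ultimately have "sort rs = rev xs" by (metis properties_for_sort)
  then show "xs = rev (sort rs)" by simp
qed

definition tr :: "real mat \<Rightarrow> real" where "tr A = (\<Sum>i<dim_row A. A $$ (i,i))"

lemma tr_comm:
  fixes X Y :: "real mat"
  assumes "X \<in> carrier_mat n n" "Y \<in> carrier_mat n n"
  shows "tr (X * Y) = tr (Y * X)"
proof -
  have "tr (X * Y) = (\<Sum>i<n. \<Sum>j<n. X $$ (i,j) * Y $$ (j,i))"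
    using assms by (simp add: tr_def scalar_prod_def lessThan_atLeast0)
  also have "\<dots> = (\<Sum>j<n. \<Sum>i<n. Y $$ (j,i) * X $$ (i,j))"
    by (subst sum.swap) (simp add: mult.commute)
  also have "\<dots> = tr (Y * X)"
    using assms by (simp add: tr_def scalar_prod_def lessThan_atLeast0)
  finally show ?thesis .
qed

lemma spectral_summary:
  fixes M :: "real mat"
  assumes M: "M \<in> carrier_mat n n"
    and sym: "\<And>i j. i < n \<Longrightarrow> j < n \<Longrightarrow> M $$ (i,j) = M $$ (j,i)"
    and Q: "\<And>x. (\<Sum>i<n. \<Sum>j<n. M $$ (i,j) * x i * x j) \<ge> c * (\<Sum>i<n. (x i)\<^sup>2)"
  shows "sorted_wrt (\<ge>) (eigs M) \<and> length (eigs M) = n \<and> (\<forall>r\<in>set (eigs M). r \<ge> c)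
    \<and> det M = prod_list (eigs M) \<and> tr M = sum_list (eigs M)"
proof -
  obtain rs where rs: "char_poly M = (\<Prod>r\<leftarrow>rs. [:- r, 1:])" "length rs = n" "\<forall>r\<in>set rs. r \<ge> c"
    using real_factor[OF M sym Q] by blast
  have dr: "dim_row M = n" using M by simp
  have e: "eigs M = rev (sort rs)" using eigs_eq[OF rs(1)] rs(2) dr by simp
  have ms: "mset (eigs M) = mset rs" using e by simp
  have cp: "char_poly M = (\<Prod>r\<leftarrow>eigs M. [:- r, 1:])"
    using rs(1) prod_list_mset_eq[OF ms, of "\<lambda>x. [:- x, 1:]"] by simp
  obtain B P Q' where sd: "schur_decomposition M (eigs M) = (B,P,Q')"
    by (metis prod_cases3)
  from schur_decomposition[OF M cp sd] have sim: "similar_mat_wit M B P Q'"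
    and ut: "upper_triangular B" and dg: "diag_mat B = eigs M" by blast+
  note w = similar_mat_witD2[OF M sim]
  have "det M = det B" using det_similar[of M B] sim M unfolding similar_mat_def by blast
  also have "\<dots> = prod_list (eigs M)" using det_upper_triangular[OF ut w(5)] dg by simp
  finally have d: "det M = prod_list (eigs M)" .
  have "tr M = tr (P * (B * Q'))" using w(3) assoc_mult_mat[OF w(6) w(5) w(7)] by simp
  also have "\<dots> = tr ((B * Q') * P)" using w by (intro tr_comm) auto
  also have "(B * Q') * P = B" using assoc_mult_mat[OF w(5) w(7) w(6)] w(2) right_mult_one_mat[OF w(5)] by simp
  also have "tr B = sum_list (diag_mat B)" using w(5)
    by (simp add: tr_def diag_mat_def sum_list_sum_nth lessThan_atLeast0)
  finally have t: "tr M = sum_list (eigs M)" using dg by simp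
  show ?thesis using e rs d t by (simp add: sorted_wrt_rev)
qed


lemma A_alpha_carrier: "A_alpha a n E \<in> carrier_mat n n"
  unfolding A_alpha_def deg_matrix_def adj_matrix_def by auto

lemma A_alpha_index:
  assumes "i < n" "j < n"
  shows "A_alpha a n E $$ (i,j) = a * (if i = j then real (degree n E i) else 0) + (1 - a) * (if E i j then 1 else 0)"
  using assms unfolding A_alpha_def deg_matrix_def adj_matrix_def by auto

lemma degree_sum:
  "real (degree n E i) = (\<Sum>j<n. if E i j then 1 else 0)"
proof -
  have "{j. j < n \<and> E i j} = {..<n} \<inter> {j. E i j}" by auto
  then show ?thesis unfolding degree_def by (simp add: sum.If_cases)
qed

lemma degree_ge1:
  assumes "no_isolated n E" "i < n"
  shows "degree n E i \<ge> 1"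
proof -
  from assms obtain j where "j < n" "E i j" unfolding no_isolated_def by blast
  then have "{j. j < n \<and> E i j} \<noteq> {}" by auto
  moreover have "finite {j. j < n \<and> E i j}" by simp
  ultimately show ?thesis unfolding degree_def by (simp add: Suc_leI card_gt_0_iff)
qed

lemma A_alpha_quad:
  fixes x :: "nat \<Rightarrow> real"
  assumes a: "1/2 < a" "a < 1" and G: "simple_graph n E" "no_isolated n E"
  shows "(\<Sum>i<n. \<Sum>j<n. A_alpha a n E $$ (i,j) * x i * x j) \<ge> (2*a - 1) * (\<Sum>i<n. (x i)\<^sup>2)"
proof -
  define e where "e i j = (if E i j then 1 else 0::real)" for i j
  have esym: "e i j = e j i" if "i < n" "j < n" for i j
    using G(1) that unfolding simple_graph_def e_def by auto
  define D where "D = (\<Sum>i<n. \<Sum>j<n. e i j * (x i)\<^sup>2)"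
  define X where "X = (\<Sum>i<n. \<Sum>j<n. e i j * x i * x j)"
  have dsum: "real (degree n E i) = (\<Sum>j<n. e i j)" for i
    unfolding e_def by (rule degree_sum)
  have LHS: "(\<Sum>i<n. \<Sum>j<n. A_alpha a n E $$ (i,j) * x i * x j) = a * D + (1 - a) * X"
  proof -
    have "(\<Sum>i<n. \<Sum>j<n. A_alpha a n E $$ (i,j) * x i * x j)
        = (\<Sum>i<n. a * (real (degree n E i) * (x i)\<^sup>2) + (1 - a) * (\<Sum>j<n. e i j * x i * x j))"
    proof (intro sum.cong refl)
      fix i assume i: "i \<in> {..<n}"
      have "(\<Sum>j<n. A_alpha a n E $$ (i,j) * x i * x j)
          = (\<Sum>j<n. a * ((if i = j then real (degree n E i) else 0) * x i * x j) + (1 - a) * (e i j * x i * x j))"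
        using i by (intro sum.cong refl) (simp add: A_alpha_index e_def algebra_simps)
      also have "\<dots> = a * (\<Sum>j<n. (if i = j then real (degree n E i) else 0) * x i * x j) + (1 - a) * (\<Sum>j<n. e i j * x i * x j)"
        by (simp add: sum.distrib sum_distrib_left)
      also have "(\<Sum>j<n. (if i = j then real (degree n E i) else 0) * x i * x j) = real (degree n E i) * (x i)\<^sup>2"
      proof -
        have "(\<Sum>j<n. (if i = j then real (degree n E i) else 0) * x i * x j) = (\<Sum>j<n. if j = i then real (degree n E i) * (x i)\<^sup>2 else 0)"
          by (intro sum.cong refl) (auto simp: power2_eq_square)
        then show ?thesis using i by simp
      qed
      finally show "(\<Sum>j<n. A_alpha a n E $$ (i,j) * x i * x j) = a * (real (degree n E i) * (x i)\<^sup>2) + (1 - a) * (\<Sum>j<n. e i j * x i * x j)" .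
    qed
    also have "\<dots> = a * D + (1 - a) * X"
      unfolding D_def X_def dsum by (simp add: sum.distrib sum_distrib_left sum_distrib_right)
    finally show ?thesis .
  qed
  have swapD: "(\<Sum>i<n. \<Sum>j<n. e i j * (x j)\<^sup>2) = D"
    unfolding D_def by (subst sum.swap) (intro sum.cong refl, simp add: esym)
  have "0 \<le> (\<Sum>i<n. \<Sum>j<n. e i j * (x i + x j)\<^sup>2)"
    by (intro sum_nonneg) (simp add: e_def)
  also have "\<dots> = D + 2 * X + (\<Sum>i<n. \<Sum>j<n. e i j * (x j)\<^sup>2)"
    unfolding D_def X_def
    by (simp add: sum.distrib sum_distrib_left power2_eq_square algebra_simps)
  finally have DX: "0 \<le> 2 * D + 2 * X" using swapD by simp
  have Dge: "D \<ge> (\<Sum>i<n. (x i)\<^sup>2)"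
  proof -
    have "D = (\<Sum>i<n. real (degree n E i) * (x i)\<^sup>2)"
      unfolding D_def dsum by (simp add: sum_distrib_right)
    also have "\<dots> \<ge> (\<Sum>i<n. (x i)\<^sup>2)"
    proof (intro sum_mono)
      fix i assume "i \<in> {..<n}"
      then have "real (degree n E i) \<ge> 1" using degree_ge1[OF G(2)] by simp
      then show "(x i)\<^sup>2 \<le> real (degree n E i) * (x i)\<^sup>2"
        using mult_right_mono[of 1 "real (degree n E i)" "(x i)\<^sup>2"] by simp
    qed
    finally show ?thesis .
  qed
  have "a * D + (1 - a) * X \<ge> (2*a - 1) * D"
  proof -
    have "(1 - a) * X \<ge> (1 - a) * (- D)" using DX a by (intro mult_left_mono) auto
    then show ?thesis by (simp add: algebra_simps)
  qed
  moreover have "(2*a - 1) * D \<ge> (2*a - 1) * (\<Sum>i<n. (x i)\<^sup>2)"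
    using Dge a by (intro mult_left_mono) auto
  ultimately show ?thesis unfolding LHS by linarith
qed

lemma sum_degree:
  assumes G: "simple_graph n E"
  shows "(\<Sum>i<n. degree n E i) = 2 * num_edges n E"
proof -
  let ?L = "{(i, j). i < j \<and> j < n \<and> E i j}"
  let ?U = "{(i, j). j < i \<and> i < n \<and> E i j}"
  have fin: "finite ?L" "finite ?U"
    by (rule finite_subset[of _ "{..<n} \<times> {..<n}"], auto)+
  have "(\<Sum>i<n. degree n E i) = card (SIGMA i:{..<n}. {j. j < n \<and> E i j})"
    unfolding degree_def by (subst card_SigmaI) auto
  also have "(SIGMA i:{..<n}. {j. j < n \<and> E i j}) = ?L \<union> ?U"
    using G unfolding simple_graph_def by auto (metis nat_neq_iff)
  also have "card (?L \<union> ?U) = card ?L + card ?U"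
    by (rule card_Un_disjoint[OF fin]) auto
  also have "card ?U = card ?L"
  proof (rule bij_betw_same_card)
    show "bij_betw (\<lambda>(i,j). (j,i)) ?U ?L"
      unfolding bij_betw_def inj_on_def using G unfolding simple_graph_def
      by (auto simp: image_def)
  qed
  finally show ?thesis unfolding num_edges_def by simp
qed

lemma A_alpha_tr:
  assumes G: "simple_graph n E"
  shows "tr (A_alpha a n E) = 2 * a * real (num_edges n E)"
proof -
  have "tr (A_alpha a n E) = (\<Sum>i<n. a * real (degree n E i))"
    unfolding tr_def using A_alpha_carrier[of a n E] G
    by (intro sum.cong) (auto simp: A_alpha_index simple_graph_def)
  also have "\<dots> = a * real (\<Sum>i<n. degree n E i)" by (simp add: sum_distrib_left)
  also have "\<dots> = 2 * a * real (num_edges n E)" using sum_degree[OF G] by simp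
  finally show ?thesis .
qed


lemma amgm:
  fixes x :: "nat \<Rightarrow> real"
  assumes "finite S" "S \<noteq> {}" "\<And>i. i \<in> S \<Longrightarrow> x i > 0"
  shows "(\<Prod>i\<in>S. x i) powr (1 / card S) \<le> (\<Sum>i\<in>S. x i) / card S"
  using arith_geom_mean[OF assms(1,2), of x] assms(3) by (simp add: sum_divide_distrib less_imp_le)

lemma amgm_strict:
  fixes x :: "nat \<Rightarrow> real"
  assumes S: "finite S" and pos: "\<And>i. i \<in> S \<Longrightarrow> x i > 0"
    and ab: "a \<in> S" "b \<in> S" "x a \<noteq> x b"
  shows "(\<Prod>i\<in>S. x i) powr (1 / card S) < (\<Sum>i\<in>S. x i) / card S"
proof -
  have anb: "a \<noteq> b" using ab by auto
  define m where "m = (x a + x b) / 2"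
  define y where "y = (x(a := m))(b := m)"
  have R: "S - {a} - {b} = S - {a, b}" by auto
  have yo: "y i = x i" if "i \<in> S - {a, b}" for i using that unfolding y_def by auto
  have mpos: "m > 0" unfolding m_def using pos[OF ab(1)] pos[OF ab(2)] by auto
  have ypos: "y i > 0" if "i \<in> S" for i using pos that mpos unfolding y_def by auto
  have bin: "b \<in> S - {a}" using ab anb by auto
  have sx: "(\<Sum>i\<in>S. x i) = x a + (x b + (\<Sum>i\<in>S - {a, b}. x i))"
    using sum.remove[OF S ab(1), where g=x] sum.remove[of "S - {a}" b x] S bin R by simp
  have sy: "(\<Sum>i\<in>S. y i) = y a + (y b + (\<Sum>i\<in>S - {a, b}. y i))"
    using sum.remove[OF S ab(1), where g=y] sum.remove[of "S - {a}" b y] S bin R by simp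
  have px: "(\<Prod>i\<in>S. x i) = x a * (x b * (\<Prod>i\<in>S - {a, b}. x i))"
    using prod.remove[OF S ab(1), where g=x] prod.remove[of "S - {a}" b x] S bin R by simp
  have py: "(\<Prod>i\<in>S. y i) = y a * (y b * (\<Prod>i\<in>S - {a, b}. y i))"
    using prod.remove[OF S ab(1), where g=y] prod.remove[of "S - {a}" b y] S bin R by simp
  have ya: "y a = m" "y b = m" unfolding y_def using anb by auto
  have sumeq: "(\<Sum>i\<in>S. y i) = (\<Sum>i\<in>S. x i)"
    unfolding sx sy ya using yo by (simp add: m_def)
  have Rpos: "(\<Prod>i\<in>S - {a, b}. x i) > 0" using pos by (intro prod_pos) auto
  have "x a * x b < m * m"
  proof -
    have "(x a - x b)^2 > 0" using ab(3) by simp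
    then show ?thesis unfolding m_def by (simp add: power2_eq_square algebra_simps)
  qed
  then have "(\<Prod>i\<in>S. x i) < (\<Prod>i\<in>S. y i)"
    unfolding px py ya using yo Rpos by (simp add: mult.assoc[symmetric])
  moreover have "(\<Prod>i\<in>S. x i) > 0" using pos by (intro prod_pos) auto
  ultimately have "(\<Prod>i\<in>S. x i) powr (1 / card S) < (\<Prod>i\<in>S. y i) powr (1 / card S)"
    using S ab by (intro powr_less_mono2) (auto simp: card_gt_0_iff)
  also have "\<dots> \<le> (\<Sum>i\<in>S. y i) / card S"
    using amgm[of S y] S ab ypos by auto
  finally show ?thesis unfolding sumeq .
qed

lemma sorted_nth_ge:
  fixes ls :: "real list"
  assumes "sorted_wrt (\<ge>) ls" "i \<le> j" "j < length ls"
  shows "ls ! j \<le> ls ! i"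
  using assms sorted_wrt_nth_less[of "(\<ge>)" ls i j] by (cases "i = j") auto

lemma main_ineq:
  fixes ls :: "real list" and n k :: nat
  assumes srt: "sorted_wrt (\<ge>) ls" and len: "length ls = n" and pos: "\<forall>r\<in>set ls. r > 0"
    and k: "1 \<le> k" "k \<le> n - 1"
  shows "sum_list (take k ls) \<le> sum_list ls - real (n - k) * (prod_list ls / (ls ! 0 * (ls ! 1) ^ (k - 1))) powr (1 / real (n - k))
    \<and> (sum_list (take k ls) = sum_list ls - real (n - k) * (prod_list ls / (ls ! 0 * (ls ! 1) ^ (k - 1))) powr (1 / real (n - k))
       \<longleftrightarrow> (\<forall>i. 1 \<le> i \<and> i < k \<longrightarrow> ls ! i = ls ! 1) \<and> (\<forall>i. k \<le> i \<and> i < n \<longrightarrow> ls ! i = ls ! k))"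
proof -
  define f where "f i = ls ! i" for i
  have fpos: "f i > 0" if "i < n" for i using pos that len unfolding f_def by auto
  have fmono: "f j \<le> f i" if "i \<le> j" "j < n" for i j
    using sorted_nth_ge[OF srt that(1)] that len unfolding f_def by auto
  have kn: "k < n" "2 \<le> n" using k by auto
  define N where "N = n - k"
  have Npos: "N \<ge> 1" using kn unfolding N_def by simp
  define T where "T = (\<Sum>i\<in>{k..<n}. f i)"
  define P where "P = (\<Prod>i\<in>{k..<n}. f i)"
  define Q1 where "Q1 = (\<Prod>i\<in>{1..<k}. f i)"
  have sl: "sum_list ls = (\<Sum>i\<in>{0..<n}. f i)" unfolding f_def using len by (simp add: sum_list_sum_nth)
  have st: "sum_list (take k ls) = (\<Sum>i\<in>{0..<k}. f i)"
    unfolding f_def using len kn by (simp add: sum_list_sum_nth min_def)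
  have pl: "prod_list ls = (\<Prod>i\<in>{0..<n}. f i)" unfolding f_def using len
    by (simp add: prod.list_conv_set_nth)
  have sT: "sum_list ls - sum_list (take k ls) = T"
    unfolding sl st T_def using sum.atLeastLessThan_concat[of 0 k n f] kn by simp
  have pQ: "prod_list ls = f 0 * Q1 * P"
    unfolding pl Q1_def P_def using prod.atLeastLessThan_concat[of 1 k n f] prod.atLeast_Suc_lessThan[of 0 n f] kn k
    by simp
  have Ppos: "P > 0" unfolding P_def using fpos by (intro prod_pos) auto
  have Q1pos: "Q1 > 0" unfolding Q1_def using fpos kn by (intro prod_pos) auto
  have f1pos: "f 1 > 0" using fpos kn by auto
  have f0pos: "f 0 > 0" using fpos kn by auto
  have Q1le: "Q1 \<le> f 1 ^ (k - 1)"
  proof -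
    have "Q1 \<le> (\<Prod>i\<in>{1..<k}. f 1)" unfolding Q1_def
      using fpos fmono kn by (intro prod_mono) (auto simp: less_imp_le)
    then show ?thesis by simp
  qed
  have Q1eq: "Q1 = f 1 ^ (k - 1) \<longleftrightarrow> (\<forall>i. 1 \<le> i \<and> i < k \<longrightarrow> f i = f 1)"
  proof
    assume eq: "Q1 = f 1 ^ (k - 1)"
    show "\<forall>i. 1 \<le> i \<and> i < k \<longrightarrow> f i = f 1"
    proof (rule ccontr)
      assume "\<not> ?thesis"
      then obtain j where j: "1 \<le> j" "j < k" "f j \<noteq> f 1" by blast
      then have "f j < f 1" using fmono[of 1 j] kn by fastforce
      then have "Q1 < (\<Prod>i\<in>{1..<k}. f 1)" unfolding Q1_def
        using j fpos fmono kn f1pos by (intro prod_mono_strict[of j]) (auto simp: less_imp_le)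
      then show False using eq by simp
    qed
  next
    assume all1: "\<forall>i. 1 \<le> i \<and> i < k \<longrightarrow> f i = f 1"
    have "Q1 = (\<Prod>i\<in>{1..<k}. f 1)" unfolding Q1_def
      by (intro prod.cong refl) (meson all1 atLeastLessThan_iff)
    then show "Q1 = f 1 ^ (k - 1)" by simp
  qed
  define G where "G = prod_list ls / (f 0 * f 1 ^ (k - 1))"
  have G: "G = (Q1 / f 1 ^ (k - 1)) * P" unfolding G_def pQ using f0pos by simp
  have Gpos: "G > 0" unfolding G using Q1pos f1pos Ppos by simp
  have GP: "G \<le> P"
  proof -
    have "Q1 / f 1 ^ (k - 1) \<le> 1" using Q1le f1pos by simp
    then have "(Q1 / f 1 ^ (k - 1)) * P \<le> 1 * P" using Ppos by (intro mult_right_mono) auto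
    then show ?thesis unfolding G by simp
  qed
  have GPeq: "G = P \<longleftrightarrow> Q1 = f 1 ^ (k - 1)" unfolding G using Ppos f1pos by (auto simp: field_simps)
  define g where "g = G powr (1 / real N)"
  define p where "p = P powr (1 / real N)"
  have gp: "g \<le> p" unfolding g_def p_def using GP Gpos by (intro powr_mono2) auto
  have gpeq: "g = p \<longleftrightarrow> G = P"
  proof
    assume "g = p"
    show "G = P"
    proof (rule ccontr)
      assume "G \<noteq> P" then have "G < P" using GP by simp
      then have "g < p" unfolding g_def p_def using Gpos Npos by (intro powr_less_mono2) auto
      then show False using \<open>g = p\<close> by simp
    qed
  qed (simp add: g_def p_def)
  have cardS: "card {k..<n} = N" unfolding N_def by simp
  have Sne: "{k..<n} \<noteq> {}" using kn by simp
  have pT: "p \<le> T / N"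
    using amgm[of "{k..<n}" f] Sne fpos unfolding p_def P_def T_def cardS by auto
  have pTeq: "p = T / N \<longleftrightarrow> (\<forall>i. k \<le> i \<and> i < n \<longrightarrow> f i = f k)"
  proof
    assume eq: "p = T / N"
    show "\<forall>i. k \<le> i \<and> i < n \<longrightarrow> f i = f k"
    proof (rule ccontr)
      assume "\<not> ?thesis"
      then obtain j where j: "k \<le> j" "j < n" "f j \<noteq> f k" by blast
      have "p < T / N"
        using amgm_strict[of "{k..<n}" f j k] j fpos kn unfolding p_def P_def T_def cardS by auto
      then show False using eq by simp
    qed
  next
    assume all: "\<forall>i. k \<le> i \<and> i < n \<longrightarrow> f i = f k"
    have "P = (\<Prod>i\<in>{k..<n}. f k)" unfolding P_def
      by (intro prod.cong refl) (meson all atLeastLessThan_iff)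
    then have "P = f k ^ N" using cardS by simp
    moreover have "T = (\<Sum>i\<in>{k..<n}. f k)" unfolding T_def
      by (intro sum.cong refl) (meson all atLeastLessThan_iff)
    then have "T = N * f k" using cardS by simp
    moreover have "f k > 0" using fpos kn by simp
    ultimately show "p = T / N" unfolding p_def using Npos
      by (simp add: powr_realpow[symmetric] powr_powr)
  qed
  have lhs: "sum_list ls - real (n - k) * (prod_list ls / (ls ! 0 * (ls ! 1) ^ (k - 1))) powr (1 / real (n - k))
      = sum_list (take k ls) + (T - N * g)"
    using sT unfolding g_def G_def N_def f_def by simp
  have Ng: "N * g \<le> T"
  proof -
    have "N * g \<le> N * p" using gp by (simp add: mult_left_mono)
    also have "\<dots> \<le> N * (T / N)" using pT by (intro mult_left_mono) auto
    finally show ?thesis using Npos by simp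
  qed
  have Ngeq: "N * g = T \<longleftrightarrow> g = p \<and> p = T / N"
  proof
    assume eq: "N * g = T"
    have "N * g \<le> N * p" using gp by (simp add: mult_left_mono)
    moreover have "N * p \<le> T" using pT Npos by (simp add: field_simps)
    ultimately have "N * g = N * p" "N * p = T" using eq by linarith+
    then show "g = p \<and> p = T / N" using Npos by (auto simp: field_simps)
  next
    assume "g = p \<and> p = T / N" then show "N * g = T" using Npos by simp
  qed
  have C: "N * g = T \<longleftrightarrow> (\<forall>i. 1 \<le> i \<and> i < k \<longrightarrow> f i = f 1) \<and> (\<forall>i. k \<le> i \<and> i < n \<longrightarrow> f i = f k)"
    by (simp only: Ngeq gpeq GPeq Q1eq pTeq)
  have D: "sum_list (take k ls) = sum_list (take k ls) + (T - N * g) \<longleftrightarrow> N * g = T" by linarith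
  show ?thesis unfolding lhs D C unfolding f_def using Ng by simp
qed

theorem theorem3p3:
  fixes \<alpha> :: real and n k :: nat and E :: "nat \<Rightarrow> nat \<Rightarrow> bool"
  assumes "1/2 < \<alpha>" and "\<alpha> < 1"
    and "simple_graph n E" and "no_isolated n E"
    and "1 \<le> k" and "k \<le> n - 1"
  shows "S_k k (A_alpha \<alpha> n E) \<le> 2 * \<alpha> * real (num_edges n E)
           - real (n - k) * (det (A_alpha \<alpha> n E) /
               (eigs (A_alpha \<alpha> n E) ! 0 * (eigs (A_alpha \<alpha> n E) ! 1) ^ (k - 1)))
             powr (1 / real (n - k))
         \<and> (S_k k (A_alpha \<alpha> n E) = 2 * \<alpha> * real (num_edges n E)
           - real (n - k) * (det (A_alpha \<alpha> n E) /
               (eigs (A_alpha \<alpha> n E) ! 0 * (eigs (A_alpha \<alpha> n E) ! 1) ^ (k - 1)))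
             powr (1 / real (n - k))
         \<longleftrightarrow> (\<forall>i. 1 \<le> i \<and> i < k \<longrightarrow> eigs (A_alpha \<alpha> n E) ! i = eigs (A_alpha \<alpha> n E) ! 1)
           \<and> (\<forall>i. k \<le> i \<and> i < n \<longrightarrow> eigs (A_alpha \<alpha> n E) ! i = eigs (A_alpha \<alpha> n E) ! k))"
proof -
  let ?M = "A_alpha \<alpha> n E"
  have M: "?M \<in> carrier_mat n n" by (rule A_alpha_carrier)
  have sym: "?M $$ (i,j) = ?M $$ (j,i)" if "i < n" "j < n" for i j
    using that assms(3) unfolding simple_graph_def by (auto simp: A_alpha_index)
  have Q: "(\<Sum>i<n. \<Sum>j<n. ?M $$ (i,j) * x i * x j) \<ge> (2*\<alpha> - 1) * (\<Sum>i<n. (x i)\<^sup>2)" for x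
    by (rule A_alpha_quad[OF assms(1-4)])
  note ss = spectral_summary[OF M sym Q]
  have pos: "\<forall>r\<in>set (eigs ?M). r > 0" using ss assms(1) by fastforce
  have tr: "sum_list (eigs ?M) = 2 * \<alpha> * real (num_edges n E)"
    using ss A_alpha_tr[OF assms(3)] by simp
  have dt: "det ?M = prod_list (eigs ?M)" using ss by simp
  show ?thesis
    unfolding S_k_def dt tr[symmetric]
    by (rule main_ineq) (use ss pos assms(5,6) in auto)
qed

end
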